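(* Let $X$ be a Hausdorff space and $D\subseteq X$ a dense subset. If $D^{\mathfrak c}$ is relatively countably compact in $X^{\mathfrak c}$, then $[D]^{<\omega}\setminus\{\emptyset\}$ is relatively countably compact in $\operatorname{CL}(X)$ and $\operatorname{CL}(X)$ is pseudocompact.
   Context: A subset $Y$ of a space $Z$ is relatively countably compact in $Z$ if every countably infinite subset of $Y$ has an accumulation point in $Z$. $[D]^{<\omega}$ is the set of finite subsets of $D$ (nonempty finite subsets of a $T_1$ space are closed, hence points of $\operatorname{CL}(X)$). $\operatorname{CL}(X)$ is the set of nonempty closed subsets of $X$ with the Vietoris topology, generated by $A^+=\{F:F\subseteq A\}$ and $A^-=\{F:F\cap A\ne\emptyset\}$ for open $A\subseteq X$. Powers carry the product topology. Pseudocompact means every continuous real-valued function is bounded. *)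

theory Defs
  imports "HOL-Analysis.Analysis"
begin

definition CL :: "'a topology \<Rightarrow> 'a set set" where
  "CL X = {F. closedin X F \<and> F \<noteq> {}}"

definition vietoris :: "'a topology \<Rightarrow> 'a set topology" where
  "vietoris X = topology_generated_by
     ({ {F \<in> CL X. F \<subseteq> A} | A. openin X A } \<union>
      { {F \<in> CL X. F \<inter> A \<noteq> {}} | A. openin X A })"

definition rel_countably_compact :: "'b topology \<Rightarrow> 'b set \<Rightarrow> bool" where
  "rel_countably_compact Z Y \<longleftrightarrow>
     (\<forall>S. S \<subseteq> Y \<and> countable S \<and> infinite S \<longrightarrow> Z derived_set_of S \<noteq> {})"

definition pseudocompact :: "'b topology \<Rightarrow> bool" where
  "pseudocompact Z \<longleftrightarrow>
     (\<forall>f. continuous_map Z euclideanreal f \<longrightarrow> bounded (f ` topspace Z))"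

end

theory Submission
  imports Defs
begin

lemma code_inj: "\<exists>e :: (nat \<Rightarrow> nat) \<Rightarrow> real. inj e"
proof -
  obtain b where b: "bij_betw b (UNIV::nat set set) (UNIV::real set)"
    using nat_sets_eqpoll_reals unfolding eqpoll_def by blast
  define gr where "gr = (\<lambda>g::nat\<Rightarrow>nat. range (\<lambda>n. to_nat (n, g n)))"
  have "inj gr"
  proof (rule injI)
    fix f g assume "gr f = gr g"
    show "f = g"
    proof
      fix n
      have "to_nat (n, f n) \<in> gr g" using \<open>gr f = gr g\<close> unfolding gr_def by (metis rangeI)
      then obtain m where "to_nat (n, f n) = to_nat (m, g m)" unfolding gr_def by auto
      then show "f n = g n" by auto
    qed
  qed
  then have "inj (b \<circ> gr)" using b by (simp add: bij_betw_def inj_compose)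
  then show ?thesis by blast
qed

lemma CL_finite:
  assumes "t1_space X" "finite F" "F \<subseteq> topspace X" "F \<noteq> {}"
  shows "F \<in> CL X"
  using assms by (simp add: CL_def t1_space_closedin_finite)

definition VB :: "'a topology \<Rightarrow> 'a set \<Rightarrow> 'a set set \<Rightarrow> 'a set set" where
  "VB X W \<V> = {F \<in> CL X. F \<subseteq> W \<and> (\<forall>V\<in>\<V>. F \<inter> V \<noteq> {})}"

lemma topspace_vietoris: "topspace (vietoris X) = CL X"
proof -
  have "CL X \<in> { {F \<in> CL X. F \<subseteq> A} | A. openin X A }"
    by (auto simp: CL_def dest: closedin_subset intro!: exI[of _ "topspace X"])
  then show ?thesis unfolding vietoris_def by auto
qed

lemma vietoris_nbhd_gen:
  assumes "generate_topology_on
     ({ {F \<in> CL X. F \<subseteq> A} | A. openin X A } \<union>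
      { {F \<in> CL X. F \<inter> A \<noteq> {}} | A. openin X A }) U"
  shows "\<forall>G\<in>U. \<exists>W \<V>. openin X W \<and> finite \<V> \<and> (\<forall>V\<in>\<V>. openin X V) \<and>
          G \<in> VB X W \<V> \<and> VB X W \<V> \<subseteq> U"
  using assms
proof induction
  case Empty
  then show ?case by simp
next
  case (Int a b)
  show ?case
  proof
    fix G assume G: "G \<in> a \<inter> b"
    then have Ga: "G \<in> a" and Gb: "G \<in> b" by auto
    have h1: "\<exists>W \<V>. openin X W \<and> finite \<V> \<and> (\<forall>V\<in>\<V>. openin X V) \<and>
          G \<in> VB X W \<V> \<and> VB X W \<V> \<subseteq> a" using bspec[OF Int.IH(1) Ga] .
    have h2: "\<exists>W \<V>. openin X W \<and> finite \<V> \<and> (\<forall>V\<in>\<V>. openin X V) \<and>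
          G \<in> VB X W \<V> \<and> VB X W \<V> \<subseteq> b" using bspec[OF Int.IH(2) Gb] .
    obtain W1 V1 where 1: "openin X W1" "finite V1" "\<forall>V\<in>V1. openin X V"
          "G \<in> VB X W1 V1" "VB X W1 V1 \<subseteq> a" using h1 by (elim exE conjE)
    obtain W2 V2 where 2: "openin X W2" "finite V2" "\<forall>V\<in>V2. openin X V"
          "G \<in> VB X W2 V2" "VB X W2 V2 \<subseteq> b" using h2 by (elim exE conjE)
    have s1: "VB X (W1 \<inter> W2) (V1 \<union> V2) \<subseteq> VB X W1 V1 \<inter> VB X W2 V2"
      by (auto simp: VB_def)
    have s2: "VB X (W1 \<inter> W2) (V1 \<union> V2) \<subseteq> a \<inter> b"
      using s1 1(5) 2(5) by blast
    have g: "G \<in> VB X (W1 \<inter> W2) (V1 \<union> V2)" using 1(4) 2(4) by (auto simp: VB_def)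
    have o: "openin X (W1 \<inter> W2)" using 1(1) 2(1) by (rule openin_Int)
    have f: "finite (V1 \<union> V2)" using 1(2) 2(2) by simp
    have ov: "\<forall>V\<in>V1 \<union> V2. openin X V" using 1(3) 2(3) by blast
    show "\<exists>W \<V>. openin X W \<and> finite \<V> \<and> (\<forall>V\<in>\<V>. openin X V) \<and>
          G \<in> VB X W \<V> \<and> VB X W \<V> \<subseteq> a \<inter> b"
      using o f ov g s2 by blast
  qed
next
  case (UN K)
  show ?case
  proof
    fix G assume "G \<in> \<Union>K"
    then obtain k where k: "k \<in> K" "G \<in> k" by blast
    then obtain W \<V> where "openin X W \<and> finite \<V> \<and> (\<forall>V\<in>\<V>. openin X V) \<and>
          G \<in> VB X W \<V> \<and> VB X W \<V> \<subseteq> k" using UN.IH by meson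
    moreover have "k \<subseteq> \<Union>K" using k by blast
    ultimately show "\<exists>W \<V>. openin X W \<and> finite \<V> \<and> (\<forall>V\<in>\<V>. openin X V) \<and>
          G \<in> VB X W \<V> \<and> VB X W \<V> \<subseteq> \<Union>K" by (meson order_trans)
  qed
next
  case (Basis s)
  show ?case
  proof
    fix G assume G: "G \<in> s"
    show "\<exists>W \<V>. openin X W \<and> finite \<V> \<and> (\<forall>V\<in>\<V>. openin X V) \<and>
          G \<in> VB X W \<V> \<and> VB X W \<V> \<subseteq> s"
    proof (cases "s \<in> { {F \<in> CL X. F \<subseteq> A} | A. openin X A }")
      case True
      then obtain A where A: "openin X A" "s = {F \<in> CL X. F \<subseteq> A}" by blast
      show ?thesis using A G by (intro exI[of _ A] exI[of _ "{}"]) (auto simp: VB_def)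
    next
      case False
      then obtain A where A: "openin X A" "s = {F \<in> CL X. F \<inter> A \<noteq> {}}" using Basis by blast
      show ?thesis using A G
        by (intro exI[of _ "topspace X"] exI[of _ "{A}"]) (auto simp: VB_def CL_def closedin_subset)
    qed
  qed
qed

lemma vietoris_nbhd:
  assumes "openin (vietoris X) U" "G \<in> U"
  shows "\<exists>W \<V>. openin X W \<and> finite \<V> \<and> (\<forall>V\<in>\<V>. openin X V) \<and>
          G \<in> VB X W \<V> \<and> VB X W \<V> \<subseteq> U"
proof -
  have "generate_topology_on
     ({ {F \<in> CL X. F \<subseteq> A} | A. openin X A } \<union>
      { {F \<in> CL X. F \<inter> A \<noteq> {}} | A. openin X A }) U"
    using assms(1) unfolding vietoris_def openin_topology_generated_by_iff .
  from bspec[OF vietoris_nbhd_gen[OF this] assms(2)] show ?thesis .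
qed

lemma vietoris_t1:
  assumes "t1_space X" shows "t1_space (vietoris X)"
  unfolding t1_space_def topspace_vietoris
proof (intro ballI impI)
  fix G H assume G: "G \<in> CL X" and H: "H \<in> CL X" and "G \<noteq> H"
  show "\<exists>U. openin (vietoris X) U \<and> G \<in> U \<and> H \<notin> U"
  proof (cases "G \<subseteq> H")
    case False
    then obtain x where x: "x \<in> G" "x \<notin> H" by blast
    let ?A = "topspace X - H"
    have oA: "openin X ?A" using H by (auto simp: CL_def)
    have "{F \<in> CL X. F \<inter> ?A \<noteq> {}} \<in> { {F \<in> CL X. F \<inter> A \<noteq> {}} | A. openin X A }"
      using oA by auto
    then have "openin (vietoris X) {F \<in> CL X. F \<inter> ?A \<noteq> {}}"
      unfolding vietoris_def by (intro topology_generated_by_Basis UnI2)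
    moreover have "G \<in> {F \<in> CL X. F \<inter> ?A \<noteq> {}}" using G x closedin_subset[of X G]
      by (auto simp: CL_def)
    ultimately show ?thesis by blast
  next
    case True
    then obtain x where x: "x \<in> H" "x \<notin> G" using \<open>G \<noteq> H\<close> by blast
    let ?A = "topspace X - {x}"
    have "x \<in> topspace X" using H x closedin_subset[of X H] by (auto simp: CL_def)
    then have oA: "openin X ?A" using closedin_t1_singleton[OF assms] by (simp add: openin_diff)
    have "{F \<in> CL X. F \<subseteq> ?A} \<in> { {F \<in> CL X. F \<subseteq> A} | A. openin X A }"
      using oA by auto
    then have "openin (vietoris X) {F \<in> CL X. F \<subseteq> ?A}"
      unfolding vietoris_def by (intro topology_generated_by_Basis UnI1)
    moreover have "G \<in> {F \<in> CL X. F \<subseteq> ?A}" using G x closedin_subset[of X G]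
      by (auto simp: CL_def)
    ultimately show ?thesis using x by blast
  qed
qed

lemma rcc_part:
  fixes X :: "'a topology" and D :: "'a set"
  assumes t1: "t1_space X" and Dsub: "D \<subseteq> topspace X"
    and rcc: "rel_countably_compact (product_topology (\<lambda>_::real. X) UNIV) (PiE UNIV (\<lambda>_. D))"
  shows "rel_countably_compact (vietoris X) {F. F \<subseteq> D \<and> finite F \<and> F \<noteq> {}}"
  unfolding rel_countably_compact_def
proof (intro allI impI, elim conjE)
  fix S assume Ssub: "S \<subseteq> {F. F \<subseteq> D \<and> finite F \<and> F \<noteq> {}}" and cS: "countable S" and iS: "infinite S"
  obtain en where en: "bij_betw en S (UNIV::nat set)" using countableE_infinite[OF cS iS] by blast
  define F where "F = inv_into S en"
  have bF: "bij_betw F UNIV S" unfolding F_def by (rule bij_betw_inv_into[OF en])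
  have FS: "F n \<in> S" for n using bF by (auto simp: bij_betw_def)
  have injF: "inj F" using bF by (auto simp: bij_betw_def)
  have FD: "F n \<subseteq> D" "finite (F n)" "F n \<noteq> {}" for n using FS Ssub by auto
  have cF: "countable (F n)" for n using FD(2) by (rule countable_finite)
  obtain e :: "(nat \<Rightarrow> nat) \<Rightarrow> real" where ie: "inj e" using code_inj by blast
  define \<phi> where "\<phi> = inv e"
  have \<phi>e: "\<phi> (e g) = g" for g unfolding \<phi>_def using ie by simp
  define x where "x = (\<lambda>n t. from_nat_into (F n) (\<phi> t n))"
  have xF: "x n t \<in> F n" for n t unfolding x_def using FD(3) by (rule from_nat_into)
  have xchoice: "\<exists>s. \<forall>n. x n s = a n" if a: "\<And>n. a n \<in> F n" for a
  proof -
    have "\<exists>k. from_nat_into (F n) k = a n" for n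
      using range_from_nat_into[OF FD(3) cF, of n] a[of n] by (metis imageE)
    then obtain k where k: "\<And>n. from_nat_into (F n) (k n) = a n" by metis
    show ?thesis using k by (intro exI[of _ "e k"]) (simp add: x_def \<phi>e)
  qed
  have rx: "range (x n) = F n" for n
  proof
    show "range (x n) \<subseteq> F n" using xF by auto
    show "F n \<subseteq> range (x n)"
    proof
      fix y assume y: "y \<in> F n"
      define a where "a = (\<lambda>m. if m = n then y else from_nat_into (F m) 0)"
      have "a m \<in> F m" for m using y from_nat_into[OF FD(3)] by (auto simp: a_def)
      then obtain s where "\<forall>m. x m s = a m" using xchoice by blast
      then have "x n s = y" by (simp add: a_def)
      then show "y \<in> range (x n)" by (metis rangeI)
    qed
  qed
  have injx: "inj x"
  proof (rule injI)
    fix n m assume "x n = x m"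
    then have "F n = F m" using rx by metis
    then show "n = m" using injF by (simp add: inj_eq)
  qed
  define P where "P = range x"
  have PD: "P \<subseteq> PiE UNIV (\<lambda>_. D)" using xF FD(1) by (auto simp: P_def PiE_UNIV_domain)
  have "countable P" "infinite P" using injx by (auto simp: P_def dest: finite_imageD)
  then obtain p where p: "p \<in> product_topology (\<lambda>_::real. X) UNIV derived_set_of P"
    using rcc PD unfolding rel_countably_compact_def by (meson all_not_in_conv)
  let ?PT = "product_topology (\<lambda>_::real. X) UNIV"
  have ptop: "p t \<in> topspace X" for t using p by (auto simp: derived_set_of_def)
  define R where "R = range p"
  define K where "K = X closure_of R"
  have RK: "R \<subseteq> K" unfolding K_def by (rule closure_of_subset) (use ptop in \<open>auto simp: R_def\<close>)
  have KCL: "K \<in> CL X" using RK by (auto simp: CL_def K_def R_def)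
  have t1P: "t1_space ?PT" using t1 by (simp add: t1_space_product_topology)
  have xtop: "x n \<in> topspace ?PT" for n using xF FD(1) Dsub by (force simp: PiE_UNIV_domain)
  show "vietoris X derived_set_of S \<noteq> {}"
  proof -
    have "K \<in> vietoris X derived_set_of S"
      unfolding derived_set_of_def topspace_vietoris
    proof (intro CollectI conjI allI impI KCL, elim conjE)
      fix \<U> assume K\<U>: "K \<in> \<U>" and o\<U>: "openin (vietoris X) \<U>"
      obtain W \<V> where W: "openin X W" "finite \<V>" "\<And>V. V\<in>\<V> \<Longrightarrow> openin X V"
        "K \<in> VB X W \<V>" "VB X W \<V> \<subseteq> \<U>" using vietoris_nbhd[OF o\<U> K\<U>] by blast
      have "\<exists>t. p t \<in> V" if "V \<in> \<V>" for V
      proof -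
        have "V \<inter> K \<noteq> {}" using W(4) that by (auto simp: VB_def)
        then have "V \<inter> R \<noteq> {}" unfolding K_def using openin_Int_closure_of_eq_empty[OF W(3)[OF that]] by blast
        then show ?thesis by (auto simp: R_def)
      qed
      then obtain tV where tV: "\<And>V. V \<in> \<V> \<Longrightarrow> p (tV V) \<in> V" by metis
      define a where "a = (\<lambda>n. if F n \<subseteq> W then from_nat_into (F n) 0 else (SOME y. y \<in> F n - W))"
      have a: "a n \<in> F n" "\<not> F n \<subseteq> W \<Longrightarrow> a n \<notin> W" for n
        using from_nat_into[OF FD(3)] someI_ex[of "\<lambda>y. y \<in> F n - W"] by (auto simp: a_def)
      obtain s where s: "\<And>n. x n s = a n" using xchoice a(1) by blast
      define C where "C = {x m | m. F m = K \<and> x m \<noteq> p}"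
      have "finite (F -` {K})" using injF by (intro finite_vimageI) auto
      then have "finite (x ` (F -` {K}))" by (rule finite_imageI)
      moreover have "C \<subseteq> x ` (F -` {K})" by (auto simp: C_def)
      ultimately have fC: "finite C" by (rule rev_finite_subset)
      have "C \<subseteq> topspace ?PT" using xtop by (auto simp: C_def)
      then have cC: "closedin ?PT C" using t1P fC unfolding t1_space_closedin_finite by blast
      define U where "U = {y \<in> topspace ?PT. y s \<in> W} \<inter>
          \<Inter>((\<lambda>V. {y \<in> topspace ?PT. y (tV V) \<in> V}) ` \<V>)"
      have op: "openin ?PT {y \<in> topspace ?PT. y t \<in> A}" if "openin X A" for t A
        using openin_continuous_map_preimage[OF continuous_map_product_projection[of t UNIV "\<lambda>_. X"] that] by simp
      have oU: "openin ?PT U" unfolding U_def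
        by (intro openin_Int_Inter finite_imageI W(2) op W(1)) (auto simp del: topspace_product_topology intro!: op W(3))
      have pU: "p \<in> U - C"
      proof -
        have "p s \<in> W" using RK W(4) by (auto simp: VB_def R_def)
        moreover have "p \<in> topspace ?PT" using p by (auto simp: derived_set_of_def)
        ultimately show ?thesis using tV by (auto simp: U_def C_def)
      qed
      obtain y where y: "y \<noteq> p" "y \<in> P" "y \<in> U - C"
        using p pU openin_diff[OF oU cC] unfolding derived_set_of_def by blast
      then obtain n where yn: "y = x n" by (auto simp: P_def)
      have FnK: "F n \<noteq> K" using y yn by (auto simp: C_def)
      have "x n s \<in> W" using y yn by (auto simp: U_def)
      then have FW: "F n \<subseteq> W" using a(2)[of n] s[of n] by auto
      have "F n \<inter> V \<noteq> {}" if "V \<in> \<V>" for V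
        using y yn that xF[of n "tV V"] by (auto simp: U_def)
      moreover have "F n \<in> CL X" using CL_finite[OF t1 FD(2) _ FD(3)] FD(1) Dsub by (meson subset_trans)
      ultimately have "F n \<in> VB X W \<V>" using FW by (auto simp: VB_def)
      then show "\<exists>y. y \<noteq> K \<and> y \<in> S \<and> y \<in> \<U>" using FnK FS W(5) by blast
    qed
    then show ?thesis by blast
  qed
qed

lemma pc_part:
  fixes X :: "'a topology" and D :: "'a set"
  assumes t1: "t1_space X" and Dsub: "D \<subseteq> topspace X" and dense: "X closure_of D = topspace X"
    and rcc: "rel_countably_compact (vietoris X) {F. F \<subseteq> D \<and> finite F \<and> F \<noteq> {}}"
  shows "pseudocompact (vietoris X)"
  unfolding pseudocompact_def
proof (intro allI impI)
  fix f assume cf: "continuous_map (vietoris X) euclideanreal f"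
  show "bounded (f ` topspace (vietoris X))"
  proof (rule ccontr)
    assume nb: "\<not> bounded (f ` topspace (vietoris X))"
    have "\<exists>E. E \<subseteq> D \<and> finite E \<and> E \<noteq> {} \<and> real n < \<bar>f E\<bar>" for n :: nat
    proof -
      obtain G where G: "G \<in> CL X" "real n < \<bar>f G\<bar>"
      proof -
        have "\<not> (\<forall>G\<in>CL X. \<bar>f G\<bar> \<le> real n)"
          using nb unfolding bounded_real topspace_vietoris by auto
        then show thesis using that by (auto simp: not_le)
      qed
      define Ob where "Ob = {G \<in> topspace (vietoris X). f G \<in> {y. real n < \<bar>y\<bar>}}"
      have "open {y::real. real n < \<bar>y\<bar>}" by (intro open_Collect_less) (auto intro: continuous_intros)
      then have oOb: "openin (vietoris X) Ob" unfolding Ob_def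
        by (intro openin_continuous_map_preimage[OF cf]) simp
      have GOb: "G \<in> Ob" using G by (simp add: Ob_def topspace_vietoris)
      obtain W \<V> where W: "openin X W" "finite \<V>" "\<And>V. V\<in>\<V> \<Longrightarrow> openin X V"
        "G \<in> VB X W \<V>" "VB X W \<V> \<subseteq> Ob" using vietoris_nbhd[OF oOb GOb] by blast
      have "\<exists>d. d \<in> D \<and> d \<in> V \<and> d \<in> W" if "V \<in> \<V>" for V
      proof -
        have "V \<inter> W \<noteq> {}" using W(4) that by (auto simp: VB_def)
        then have "D \<inter> (V \<inter> W) \<noteq> {}" using dense W(1) W(3)[OF that]
          unfolding dense_intersects_open by (meson openin_Int)
        then show ?thesis by blast
      qed
      then obtain dV where dV: "\<And>V. V \<in> \<V> \<Longrightarrow> dV V \<in> D \<and> dV V \<in> V \<and> dV V \<in> W" by metis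
      have "W \<noteq> {}" using W(4) by (auto simp: VB_def CL_def)
      then obtain d0 where d0: "d0 \<in> D" "d0 \<in> W" using dense W(1) unfolding dense_intersects_open by blast
      define E where "E = insert d0 (dV ` \<V>)"
      have ED: "E \<subseteq> D" "finite E" "E \<noteq> {}" using dV d0 W(2) by (auto simp: E_def)
      have "E \<in> CL X" using CL_finite[OF t1 ED(2) _ ED(3)] ED(1) Dsub by (meson subset_trans)
      moreover have "E \<subseteq> W" using dV d0 by (auto simp: E_def)
      moreover have "E \<inter> V \<noteq> {}" if "V \<in> \<V>" for V using dV[OF that] that by (auto simp: E_def)
      ultimately have "E \<in> Ob" using W(5) by (auto simp: VB_def)
      then show ?thesis using ED by (auto simp: Ob_def)
    qed
    then obtain y where y: "\<And>n. y n \<subseteq> D \<and> finite (y n) \<and> y n \<noteq> {} \<and> real n < \<bar>f (y n)\<bar>" by metis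
    have yCL: "y n \<in> CL X" for n
    proof -
      have "y n \<subseteq> topspace X" using y[of n] Dsub by auto
      then show ?thesis using CL_finite[OF t1] y[of n] by simp
    qed
    define Y where "Y = range y"
    have iY: "infinite Y"
    proof
      assume "finite Y"
      then have "finite (f ` Y)" by simp
      then have "bounded (f ` Y)" by (rule finite_imp_bounded)
      then obtain M where M: "\<And>n. \<bar>f (y n)\<bar> \<le> M" unfolding bounded_real Y_def by auto
      have "real (nat \<lceil>M\<rceil>) < M" using y[of "nat \<lceil>M\<rceil>"] M[of "nat \<lceil>M\<rceil>"] by linarith
      then show False by linarith
    qed
    have "countable Y" by (simp add: Y_def)
    then obtain z where z: "z \<in> vietoris X derived_set_of Y"
    proof -
      have "Y \<subseteq> {F. F \<subseteq> D \<and> finite F \<and> F \<noteq> {}}" using y by (auto simp: Y_def)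
      then have "vietoris X derived_set_of Y \<noteq> {}"
        using rcc[unfolded rel_countably_compact_def, rule_format, of Y] iY \<open>countable Y\<close> by simp
      then show thesis using that by blast
    qed
    have zCL: "z \<in> CL X" using z by (auto simp: derived_set_of_def topspace_vietoris)
    define M where "M = nat \<lceil>\<bar>f z\<bar>\<rceil>"
    define C where "C = y ` {..M} - {z}"
    have "C \<subseteq> CL X" using yCL by (auto simp: C_def)
    moreover have "finite C" by (simp add: C_def)
    ultimately have cC: "closedin (vietoris X) C" using vietoris_t1[OF t1]
      unfolding t1_space_closedin_finite topspace_vietoris by blast
    define Ob where "Ob = {G \<in> topspace (vietoris X). f G \<in> {r. \<bar>r\<bar> < \<bar>f z\<bar> + 1}}"
    have "open {r::real. \<bar>r\<bar> < \<bar>f z\<bar> + 1}" by (intro open_Collect_less) (auto intro: continuous_intros)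
    then have oOb: "openin (vietoris X) Ob" unfolding Ob_def
      by (intro openin_continuous_map_preimage[OF cf]) simp
    have "z \<in> Ob - C" using zCL by (simp add: Ob_def topspace_vietoris C_def)
    then obtain w where w: "w \<noteq> z" "w \<in> Y" "w \<in> Ob - C"
      using z openin_diff[OF oOb cC] unfolding derived_set_of_def by blast
    then obtain n where wn: "w = y n" by (auto simp: Y_def)
    have "n > M" using w wn by (auto simp: C_def)
    moreover have "\<bar>f (y n)\<bar> < \<bar>f z\<bar> + 1" using w wn by (simp add: Ob_def)
    moreover have "\<bar>f z\<bar> \<le> real M" unfolding M_def by linarith
    ultimately show False using y[of n] by linarith
  qed
qed

theorem theorem3p2:
  fixes X :: "'a topology" and D :: "'a set"
  assumes "Hausdorff_space X"
    and "D \<subseteq> topspace X" and "X closure_of D = topspace X"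
    and "rel_countably_compact (product_topology (\<lambda>_::real. X) UNIV) (PiE UNIV (\<lambda>_. D))"
  shows "rel_countably_compact (vietoris X) {F. F \<subseteq> D \<and> finite F \<and> F \<noteq> {}}
         \<and> pseudocompact (vietoris X)"
proof -
  have t1: "t1_space X" using assms(1) by (rule Hausdorff_imp_t1_space)
  have r: "rel_countably_compact (vietoris X) {F. F \<subseteq> D \<and> finite F \<and> F \<noteq> {}}"
    using rcc_part[OF t1 assms(2) assms(4)] .
  show ?thesis using r pc_part[OF t1 assms(2) assms(3) r] by blast
qed

end
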